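(* Let $F$ be a finite field of order $p^n$, where $p$ is a prime and $n\geq 1$, and let $G=\Gamma(Tr(F))$. Then $$|E(G)|=\tfrac12\,p^n\,(p^{2n}-1)\,(p^{2n}-p^n-1).$$
   Context: For a ring $S$ with identity whose center is not all of $S$, the commuting graph $\Gamma(S)$ is the simple graph with vertex set $S\setminus Z(S)$ ($Z(S)$ the center), in which two distinct vertices $a,b$ are adjacent iff $ab=ba$; $E(G)$ denotes the edge set. $Tr(F)$ denotes the ring of all $2\times 2$ upper triangular matrices over $F$. *)

theory Defs
  imports "HOL-Analysis.Analysis"
begin

definition Tr :: "(('a::field) ^2^2) set" where
  "Tr = {A. A $ 2 $ 1 = 0}"

definition mat_center :: "(('a::semiring_1) ^'n^'n) set \<Rightarrow> ('a ^'n^'n) set" where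
  "mat_center S = {A \<in> S. \<forall>B \<in> S. A ** B = B ** A}"

definition commuting_graph_edges :: "(('a::semiring_1) ^'n^'n) set \<Rightarrow> ('a ^'n^'n) set set" where
  "commuting_graph_edges S =
     {{A, B} | A B. A \<in> S - mat_center S \<and> B \<in> S - mat_center S \<and> A \<noteq> B \<and> A ** B = B ** A}"

end

theory Submission imports Defs begin

lemma handshake:
  fixes R :: "'b \<Rightarrow> 'b \<Rightarrow> bool"
  assumes fin: "finite {(a,b). R a b}" and sym: "\<And>a b. R a b \<Longrightarrow> R b a" and irr: "\<And>a. \<not> R a a"
  shows "card {(a,b). R a b} = 2 * card {{a,b}|a b. R a b}"
proof -
  let ?E = "{{a,b}|a b. R a b}"
  define S where "S e = {(a,b). R a b \<and> {a,b} = e}" for e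
  have P: "{(a,b). R a b} = (\<Union>e\<in>?E. S e)" by (auto simp: S_def)
  have finE: "finite ?E"
  proof -
    have "?E = (\<lambda>(a,b). {a,b}) ` {(a,b). R a b}" by auto
    thus ?thesis using fin by simp
  qed
  have finS: "finite (S e)" for e using fin by (rule rev_finite_subset) (auto simp: S_def)
  have c2: "card (S e) = 2" if eE: "e \<in> ?E" for e
  proof -
    obtain a b where ab: "R a b" "e = {a,b}" using eE by blast
    have "a \<noteq> b" using ab irr by metis
    have "S e = {(a,b),(b,a)}" using ab sym by (auto simp: S_def doubleton_eq_iff)
    thus ?thesis using \<open>a\<noteq>b\<close> by simp
  qed
  have "card {(a,b). R a b} = (\<Sum>e\<in>?E. card (S e))"
    unfolding P proof (rule card_UN_disjoint[OF finE])
    show "\<forall>e\<in>?E. finite (S e)" using finS by blast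
  qed (auto simp: S_def)
  also have "\<dots> = (\<Sum>e\<in>?E. 2)" using c2 by simp
  finally show ?thesis by simp
qed

definition mk :: "'a::field \<Rightarrow> 'a \<Rightarrow> 'a \<Rightarrow> 'a^2^2" where
  "mk a b c = (\<chi> i j. if i = 1 then (if j = 1 then a else b) else (if j = 1 then 0 else c))"

lemma mk_simps[simp]: "mk a b c $ 1 $ 1 = a" "mk a b c $ 1 $ 2 = b" "mk a b c $ 2 $ 2 = c" "mk a b c $ 2 $ 1 = 0"
  by (simp_all add: mk_def)

lemma mk_Tr[simp]: "mk a b c \<in> Tr" by (simp add: Tr_def)

lemma Tr_mk: "A \<in> Tr \<Longrightarrow> A = mk (A$1$1) (A$1$2) (A$2$2)"
  unfolding Tr_def by (auto simp: vec_eq_iff forall_2)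

lemma Tr_mk': "A \<in> Tr \<Longrightarrow> A$1$1 = a \<Longrightarrow> A$1$2 = b \<Longrightarrow> A$2$2 = c \<Longrightarrow> A = mk a b c"
  using Tr_mk by metis

lemma mk_eq[simp]: "mk a b c = mk x y z \<longleftrightarrow> a = x \<and> b = y \<and> c = z"
  by (metis mk_simps)

lemma comm_iff:
  fixes A B :: "'a::field^2^2"
  assumes "A \<in> Tr" "B \<in> Tr"
  shows "A ** B = B ** A \<longleftrightarrow> (A$1$1 - A$2$2) * B$1$2 = A$1$2 * (B$1$1 - B$2$2)"
  using assms unfolding Tr_def
  by (auto simp: matrix_matrix_mult_def vec_eq_iff forall_2 sum_2 algebra_simps)

lemma Tr_range: "(Tr :: ('a::field^2^2) set) = (\<lambda>(a,b,c). mk a b c) ` UNIV"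
proof (rule set_eqI, rule iffI)
  fix B :: "'a^2^2" assume "B \<in> Tr"
  hence "B = (\<lambda>(a,b,c). mk a b c) (B$1$1, B$1$2, B$2$2)" using Tr_mk by simp
  thus "B \<in> (\<lambda>(a,b,c). mk a b c) ` UNIV" by blast
qed auto

lemma card_Tr: "card (Tr :: ('a::{field,finite}^2^2) set) = CARD('a) ^ 3"
proof -
  have "inj (\<lambda>(a,b,c). mk a b (c::'a))" by (auto simp: inj_def)
  hence "card (Tr :: ('a^2^2) set) = card (UNIV :: ('a\<times>'a\<times>'a) set)"
    unfolding Tr_range by (simp add: card_image)
  thus ?thesis by (simp add: UNIV_Times_UNIV[symmetric] card_cartesian_product del: UNIV_Times_UNIV) (simp add: power3_eq_cube mult.assoc)
qed

lemma center_eq: "mat_center (Tr :: ('a::field^2^2) set) = range (\<lambda>x. mk x 0 x)"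
proof (rule set_eqI, rule iffI)
  fix B :: "'a^2^2" assume B: "B \<in> mat_center Tr"
  hence T: "B \<in> Tr" and c: "\<And>X::'a^2^2. X \<in> Tr \<Longrightarrow> B ** X = X ** B" by (auto simp: mat_center_def)
  from c[of "mk 0 1 0"] have 1: "B$1$1 = B$2$2" using comm_iff[OF T mk_Tr, of 0 1 0] by simp
  from c[of "mk 1 0 0"] have 2: "B$1$2 = 0" using comm_iff[OF T mk_Tr, of 1 0 0] 1 by simp
  have "B = mk (B$1$1) 0 (B$1$1)" by (rule Tr_mk'[OF T]) (use 1 2 in simp_all)
  thus "B \<in> range (\<lambda>x. mk x 0 x)" by (rule range_eqI)
next
  fix B :: "'a^2^2" assume "B \<in> range (\<lambda>x. mk x 0 x)"
  then obtain x where x: "B = mk x 0 x" by blast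
  show "B \<in> mat_center Tr" unfolding mat_center_def
    proof (intro CollectI conjI ballI)
    show "B \<in> Tr" using x by simp
    fix X :: "'a^2^2" assume X: "X \<in> Tr"
    show "B ** X = X ** B" using comm_iff[OF _ X, of B] x X by simp
  qed
qed

lemma card_center: "card (mat_center (Tr :: ('a::{field,finite}^2^2) set)) = CARD('a)"
proof -
  have "inj (\<lambda>x::'a. mk x 0 x)" by (auto simp: inj_def)
  thus ?thesis unfolding center_eq by (simp add: card_image)
qed

lemma card_UNIV2: "card (UNIV :: ('a::finite \<times> 'a) set) = CARD('a) ^ 2"
  by (simp add: UNIV_Times_UNIV[symmetric] card_cartesian_product power2_eq_square del: UNIV_Times_UNIV)

lemma card_centralizer:
  fixes A :: "'a::{field,finite}^2^2"
  assumes A: "A \<in> Tr - mat_center Tr"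
  shows "card {B\<in>Tr. A ** B = B ** A} = CARD('a) ^ 2"
proof -
  define d where "d = A$1$1 - A$2$2"
  define b where "b = A$1$2"
  have AT: "A \<in> Tr" using A by simp
  have nz: "\<not> (d = 0 \<and> b = 0)"
  proof
    assume h: "d = 0 \<and> b = 0"
    have "A = mk (A$1$1) 0 (A$1$1)" by (rule Tr_mk'[OF AT]) (use h in \<open>simp_all add: d_def b_def\<close>)
    hence "A \<in> mat_center Tr" unfolding center_eq by (rule range_eqI)
    thus False using A by simp
  qed
  have C: "{B\<in>Tr. A ** B = B ** A} = {B\<in>Tr. d * B$1$2 = b * (B$1$1 - B$2$2)}"
    using comm_iff[OF AT] by (auto simp: d_def b_def)
  show ?thesis
  proof (cases "b = 0")
    case True
    hence d: "d \<noteq> 0" using nz by simp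
    have "{B\<in>Tr. d * B$1$2 = b * (B$1$1 - B$2$2)} = (\<lambda>(x,z). mk x 0 z) ` UNIV"
    proof (rule set_eqI, rule iffI)
      fix B assume "B \<in> {B\<in>Tr. d * B$1$2 = b * (B$1$1 - B$2$2)}"
      hence T: "B \<in> Tr" and z: "B$1$2 = 0" using True d by auto
      have eq: "mk (B$1$1) 0 (B$2$2) = B" by (rule sym, rule Tr_mk'[OF T]) (use z in simp_all)
      show "B \<in> (\<lambda>(x,z). mk x 0 z) ` UNIV"
      proof (rule image_eqI)
        show "B = (\<lambda>(x,z). mk x 0 z) (B$1$1, B$2$2)" using eq by simp
      qed simp
    next
      fix B assume "B \<in> (\<lambda>(x,z). mk x (0::'a) z) ` UNIV"
      then obtain x z where "B = mk x 0 z" by auto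
      thus "B \<in> {B\<in>Tr. d * B$1$2 = b * (B$1$1 - B$2$2)}" using True by simp
    qed
    moreover have "inj (\<lambda>(x,z). mk x (0::'a) z)" by (auto simp: inj_def)
    ultimately show ?thesis using C by (simp add: card_image card_UNIV2 power2_eq_square)
  next
    case False
    have "{B\<in>Tr. d * B$1$2 = b * (B$1$1 - B$2$2)} = (\<lambda>(y,z). mk (z + d*y/b) y z) ` UNIV"
    proof (rule set_eqI, rule iffI)
      fix B assume "B \<in> {B\<in>Tr. d * B$1$2 = b * (B$1$1 - B$2$2)}"
      hence T: "B \<in> Tr" and e: "d * B$1$2 = b * (B$1$1 - B$2$2)" by auto
      have e2: "B$1$1 = B$2$2 + d * B$1$2 / b" using e False by (simp add: field_simps)
      have eq: "mk (B$2$2 + d * B$1$2 / b) (B$1$2) (B$2$2) = B" by (rule sym, rule Tr_mk'[OF T]) (use e2 in simp_all)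
      show "B \<in> (\<lambda>(y,z). mk (z + d*y/b) y z) ` UNIV"
      proof (rule image_eqI)
        show "B = (\<lambda>(y,z). mk (z + d*y/b) y z) (B$1$2, B$2$2)" using eq by simp
      qed simp
    next
      fix B assume "B \<in> (\<lambda>(y,z). mk (z + d*y/b) y z) ` UNIV"
      then obtain y z where "B = mk (z + d*y/b) y z" by auto
      thus "B \<in> {B\<in>Tr. d * B$1$2 = b * (B$1$1 - B$2$2)}" using False by (simp add: field_simps)
    qed
    moreover have "inj (\<lambda>(y,z). mk (z + d*y/b) y (z::'a))" by (auto simp: inj_def)
    ultimately show ?thesis using C by (simp add: card_image card_UNIV2 power2_eq_square)
  qed
qed

lemma edges_count:
  "2 * card (commuting_graph_edges (Tr :: ('a::{field,finite}^2^2) set)) =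
     (CARD('a)^3 - CARD('a)) * (CARD('a)^2 - CARD('a) - 1)"
proof -
  let ?q = "CARD('a)"
  let ?Z = "mat_center (Tr :: ('a^2^2) set)"
  define V where "V = (Tr :: ('a^2^2) set) - ?Z"
  define R where "R = (\<lambda>A B :: 'a^2^2. A \<in> V \<and> B \<in> V \<and> A \<noteq> B \<and> A ** B = B ** A)"
  have E: "commuting_graph_edges (Tr :: ('a^2^2) set) = {{a,b}|a b. R a b}"
    unfolding commuting_graph_edges_def R_def V_def by simp
  have h: "card {(a,b). R a b} = 2 * card {{a,b}|a b. R a b}"
    by (rule handshake) (auto simp: R_def intro: finite_subset[of _ UNIV])
  have ZT: "?Z \<subseteq> Tr" by (auto simp: mat_center_def)
  have cV: "card V = ?q^3 - ?q" unfolding V_def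
    by (simp add: card_Diff_subset[OF _ ZT] card_Tr card_center)
  have nb: "card {B. R A B} = ?q^2 - ?q - 1" if AV: "A \<in> V" for A
  proof -
    have AT: "A \<in> Tr" and AZ: "A \<notin> ?Z" using AV by (auto simp: V_def)
    let ?C = "{B\<in>Tr. A ** B = B ** A}"
    have eq: "{B. R A B} = ?C - insert A ?Z" using AT AZ by (auto simp: R_def V_def)
    have sub: "insert A ?Z \<subseteq> ?C" using AT ZT by (auto simp: mat_center_def)
    have "card (insert A ?Z) = ?q + 1" using AZ card_center by simp
    moreover have "card ?C = ?q^2" using card_centralizer[of A] AT AZ by simp
    ultimately show ?thesis unfolding eq using card_Diff_subset[OF _ sub] by simp
  qed
  have "{(a,b). R a b} = Sigma V (\<lambda>A. {B. R A B})" by (auto simp: R_def)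
  hence "card {(a,b). R a b} = (\<Sum>A\<in>V. card {B. R A B})"
    by simp
  also have "\<dots> = (\<Sum>A\<in>V. ?q^2 - ?q - 1)" using nb by simp
  finally show ?thesis using h E cV by simp
qed

theorem corollary2p3:
  fixes p n :: nat
  assumes "prime p" and "n \<ge> 1"
    and "CARD('a::{field, finite}) = p ^ n"
  shows "real (card (commuting_graph_edges (Tr :: ('a ^2^2) set))) =
           1/2 * real (p ^ n) * (real p ^ (2*n) - 1) * (real p ^ (2*n) - real p ^ n - 1)"
proof -
  define q where "q = CARD('a)"
  have p2: "p \<ge> 2" using assms(1) prime_ge_2_nat by blast
  have "p ^ 1 \<le> p ^ n" using assms(2) p2 by (intro power_increasing) auto
  hence q2: "q \<ge> 2" using p2 assms(3) by (simp add: q_def)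
  have a: "q \<le> q^3" using q2 by (simp add: power3_eq_cube)
  have b0: "2*q \<le> q*q" by (rule mult_le_mono1[OF q2])
  have b: "q + 1 \<le> q^2" unfolding power2_eq_square using b0 q2 by linarith
  have e: "2 * card (commuting_graph_edges (Tr :: ('a ^2^2) set)) = (q^3 - q) * (q^2 - q - 1)"
    using edges_count unfolding q_def by blast
  hence "real (2 * card (commuting_graph_edges (Tr :: ('a ^2^2) set))) = real ((q^3 - q) * (q^2 - q - 1))"
    by simp
  hence X0: "2 * real (card (commuting_graph_edges (Tr :: ('a ^2^2) set))) = (real q^3 - real q) * (real q^2 - real q - 1)"
    using a b by (simp add: of_nat_diff)
  have r1: "real p ^ (2*n) = real q ^ 2" using assms(3) by (simp add: q_def power_mult mult.commute[of 2 n])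
  have r2: "real p ^ n = real q" using assms(3) by (simp add: q_def)
  have r3: "real (p^n) = real q" using assms(3) by (simp add: q_def)
  have r4: "(real q^3 - real q) * (real q^2 - real q - 1) = real q * (real q^2 - 1) * (real q^2 - real q - 1)"
    by (simp add: power2_eq_square power3_eq_cube algebra_simps)
  show ?thesis unfolding r1 r2 r3 using X0 r4 by simp
qed

end
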